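(* Let $A$ be a unital commutative Banach algebra, $X$ a compact Hausdorff space, and $f:X\to A$ a continuous function. If $f(X)$ generates $A$, then the map $\Phi:\mathfrak{M}(A)\to \vec{\mathrm{sp}}(f)$, $\phi\mapsto\phi\circ f$, is a homeomorphism.
   Context: $\mathfrak{M}(A)$ denotes the character space of $A$ (nonzero multiplicative linear functionals, with the weak* topology). "$f(X)$ generates $A$" means that $A$ is the smallest closed subalgebra of $A$ containing $f(X)$ and the unit. The joint spectrum $\vec{\mathrm{sp}}(f)$ is the set of all functions $\lambda:X\to\mathbb{C}$ such that the ideal of $A$ generated by $\{\lambda(x)\mathbf 1-f(x):x\in X\}$ is proper; equivalently $\vec{\mathrm{sp}}(f)=\{\phi\circ f:\phi\in\mathfrak{M}(A)\}$. For continuous $f$ it is a compact subset of $C(X)$, and is given the topology of the uniform norm $\|g\|_X=\sup_{x\in X}|g(x)|$. *)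

theory Defs
  imports "HOL-Analysis.Analysis"
begin

text \<open>A complex Banach algebra structure on a real unital commutative Banach algebra:
  a complex scalar multiplication extending the real one, absolutely homogeneous
  for the norm, and compatible with the algebra multiplication.\<close>
definition complex_scaling ::
  "(complex \<Rightarrow> 'a::{banach, real_normed_algebra_1, comm_ring_1} \<Rightarrow> 'a) \<Rightarrow> bool" where
  "complex_scaling sc \<longleftrightarrow>
     (\<forall>c x y. sc c (x + y) = sc c x + sc c y) \<and>
     (\<forall>c d x. sc (c + d) x = sc c x + sc d x) \<and>
     (\<forall>c d x. sc (c * d) x = sc c (sc d x)) \<and>
     (\<forall>x. sc 1 x = x) \<and>
     (\<forall>r x. sc (complex_of_real r) x = scaleR r x) \<and>
     (\<forall>c x. norm (sc c x) = cmod c * norm x) \<and>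
     (\<forall>c x y. sc c (x * y) = sc c x * y)"

text \<open>Its topology is the weak* topology, i.e. the subspace topology of the product
  (pointwise convergence) topology on functions 'a => complex.\<close>
definition character_space ::
  "(complex \<Rightarrow> 'a::{banach, real_normed_algebra_1, comm_ring_1} \<Rightarrow> 'a) \<Rightarrow> ('a \<Rightarrow> complex) set" where
  "character_space sc = {\<phi>. (\<exists>x. \<phi> x \<noteq> 0) \<and>
      (\<forall>x y. \<phi> (x + y) = \<phi> x + \<phi> y) \<and>
      (\<forall>c x. \<phi> (sc c x) = c * \<phi> x) \<and>
      (\<forall>x y. \<phi> (x * y) = \<phi> x * \<phi> y)}"

definition complex_subalgebra ::
  "(complex \<Rightarrow> 'a::{banach, real_normed_algebra_1, comm_ring_1} \<Rightarrow> 'a) \<Rightarrow> 'a set \<Rightarrow> bool" where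
  "complex_subalgebra sc S \<longleftrightarrow> 1 \<in> S \<and> (\<forall>x\<in>S. \<forall>y\<in>S. x + y \<in> S \<and> x * y \<in> S) \<and>
      (\<forall>c. \<forall>x\<in>S. sc c x \<in> S)"

definition generates ::
  "(complex \<Rightarrow> 'a::{banach, real_normed_algebra_1, comm_ring_1} \<Rightarrow> 'a) \<Rightarrow> 'a set \<Rightarrow> bool" where
  "generates sc T \<longleftrightarrow> \<Inter>{S. complex_subalgebra sc S \<and> closed S \<and> T \<subseteq> S} = UNIV"

text \<open>Joint spectrum, as the set of functions phi o f (restricted to the carrier of X,
  so that they are elements of C(X) as represented by cfunspace).\<close>
definition joint_spectrum ::
  "(complex \<Rightarrow> 'a::{banach, real_normed_algebra_1, comm_ring_1} \<Rightarrow> 'a) \<Rightarrow> 'x topology \<Rightarrow> ('x \<Rightarrow> 'a)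
     \<Rightarrow> ('x \<Rightarrow> complex) set" where
  "joint_spectrum sc X f = (\<lambda>\<phi>. restrict (\<phi> \<circ> f) (topspace X)) ` character_space sc"

end

theory Submission
  imports Defs
begin

lemma neumann:
  fixes y :: "'a::{real_normed_algebra_1, banach, comm_ring_1}"
  assumes "norm y < 1"
  shows "\<exists>z. (1 - y) * z = 1"
proof -
  have sm: "summable (\<lambda>n. y ^ n)" by (rule complete_algebra_summable_geometric[OF assms])
  then have "(\<lambda>n. y ^ n) sums (suminf (\<lambda>n. y ^ n))" by (rule summable_sums)
  then have "(\<lambda>N. \<Sum>i<N. y ^ i) \<longlonglongrightarrow> suminf (\<lambda>n. y ^ n)" by (simp add: sums_def)
  then have l1: "(\<lambda>N. (1 - y) * (\<Sum>i<N. y ^ i)) \<longlonglongrightarrow> (1 - y) * suminf (\<lambda>n. y ^ n)"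
    by (intro tendsto_mult_left)
  have "(\<lambda>N. 1 - y ^ N) \<longlonglongrightarrow> 1 - 0"
    by (intro tendsto_diff tendsto_const LIMSEQ_power_zero assms)
  then have l2: "(\<lambda>N. (1 - y) * (\<Sum>i<N. y ^ i)) \<longlonglongrightarrow> 1"
    by (simp add: one_diff_power_eq)
  from LIMSEQ_unique[OF l1 l2] show ?thesis by blast
qed

lemma char_props:
  assumes sc: "complex_scaling sc" and phi: "\<phi> \<in> character_space sc"
  shows char_one: "\<phi> 1 = 1" and char_zero: "\<phi> 0 = 0"
    and char_diff: "\<phi> (x - y) = \<phi> x - \<phi> y"
    and char_add: "\<phi> (x + y) = \<phi> x + \<phi> y"
    and char_mult: "\<phi> (x * y) = \<phi> x * \<phi> y"
    and char_sc: "\<phi> (sc c x) = c * \<phi> x"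
proof -
  have add: "\<And>x y. \<phi> (x + y) = \<phi> x + \<phi> y" and mul: "\<And>x y. \<phi> (x * y) = \<phi> x * \<phi> y"
    and scl: "\<And>c x. \<phi> (sc c x) = c * \<phi> x"
    using phi by (auto simp: character_space_def)
  obtain u where u: "\<phi> u \<noteq> 0" using phi by (auto simp: character_space_def)
  have "\<phi> u = \<phi> 1 * \<phi> u" using mul[of 1 u] by simp
  with u show "\<phi> 1 = 1" by simp
  have z: "\<phi> 0 = 0" using add[of 0 0] by simp
  then show "\<phi> 0 = 0" .
  have "\<phi> (x - y) + \<phi> y = \<phi> x" using add[of "x - y" y] by simp
  then show "\<phi> (x - y) = \<phi> x - \<phi> y" by (simp add: algebra_simps)
  show "\<phi> (x + y) = \<phi> x + \<phi> y" "\<phi> (x * y) = \<phi> x * \<phi> y" "\<phi> (sc c x) = c * \<phi> x"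
    using add mul scl by auto
qed

lemma char_bound:
  assumes sc: "complex_scaling sc" and phi: "\<phi> \<in> character_space sc"
  shows "cmod (\<phi> x) \<le> norm x"
proof (rule ccontr)
  assume "\<not> cmod (\<phi> x) \<le> norm x"
  then have lt: "norm x < cmod (\<phi> x)" by simp
  define l where "l = \<phi> x"
  have l0: "l \<noteq> 0" using lt l_def by auto
  define y where "y = sc (inverse l) x"
  have ny: "norm y = norm x / cmod l"
    using sc by (simp add: y_def complex_scaling_def norm_inverse divide_inverse mult.commute)
  have "norm y < 1" using lt l0 by (simp add: ny l_def divide_less_eq)
  then obtain z where z: "(1 - y) * z = 1" using neumann by blast
  have "\<phi> y = 1" using l0 by (simp add: y_def char_sc[OF sc phi] l_def)
  then have "\<phi> (1 - y) = 0" by (simp add: char_diff[OF sc phi] char_one[OF sc phi])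
  then have "\<phi> ((1 - y) * z) = 0" by (simp add: char_mult[OF sc phi])
  then show False using z char_one[OF sc phi] by simp
qed

lemma char_lip:
  assumes sc: "complex_scaling sc" and phi: "\<phi> \<in> character_space sc"
  shows "dist (\<phi> a) (\<phi> b) \<le> dist a b"
  using char_bound[OF sc phi, of "a - b"] by (simp add: dist_norm char_diff[OF sc phi])

lemma char_cont:
  assumes sc: "complex_scaling sc" and phi: "\<phi> \<in> character_space sc"
  shows "continuous_on UNIV \<phi>"
  unfolding continuous_on_iff
  by (metis char_lip[OF sc phi] order_le_less_trans)

lemma char_compact:
  assumes sc: "complex_scaling sc"
  shows "compact (character_space sc)"
proof -
  define B :: "('a \<Rightarrow> complex) set" where "B = PiE UNIV (\<lambda>a. cball 0 (norm a))"
  define C :: "('a \<Rightarrow> complex) set" where "C = {\<phi>. \<phi> 1 = 1 \<and> (\<forall>x y. \<phi> (x + y) = \<phi> x + \<phi> y) \<and>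
      (\<forall>c x. \<phi> (sc c x) = c * \<phi> x) \<and> (\<forall>x y. \<phi> (x * y) = \<phi> x * \<phi> y)}"
  have "compactin (product_topology (\<lambda>_. euclidean) UNIV) B"
    unfolding B_def compactin_PiE by simp
  then have cB: "compact B" by (simp add: euclidean_product_topology)
  have cC: "closed C" unfolding C_def
    by (intro closed_Collect_conj closed_Collect_all closed_Collect_eq continuous_intros
          continuous_on_product_coordinates)
  have "character_space sc = B \<inter> C"
  proof (intro equalityI subsetI)
    fix \<phi> assume p: "\<phi> \<in> character_space sc"
    have "\<phi> \<in> B" unfolding B_def using char_bound[OF sc p] by (simp add: PiE_iff)
    moreover have "\<phi> \<in> C" unfolding C_def using p char_one[OF sc p] by (simp add: character_space_def)
    ultimately show "\<phi> \<in> B \<inter> C" by simp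
  next
    fix \<phi> assume "\<phi> \<in> B \<inter> C"
    then show "\<phi> \<in> character_space sc"
      unfolding C_def character_space_def by (auto intro: exI[of _ 1])
  qed
  then show ?thesis using cB cC by auto
qed

lemma continuous_map_to_metric_of:
  "continuous_map S (mtopology_of m) g \<longleftrightarrow>
   (\<forall>x\<in>topspace S. \<forall>\<epsilon>>0. \<exists>U. openin S U \<and> x \<in> U \<and> (\<forall>y\<in>U. g y \<in> mball_of m (g x) \<epsilon>))"
  unfolding mtopology_of_def mball_of_def
  by (rule Metric_space.continuous_map_to_metric[OF Metric_space_mspace_mdist])

lemma Hausdorff_mtopology_of: "Hausdorff_space (mtopology_of m)"
  unfolding mtopology_of_def
  by (rule Metric_space.Hausdorff_space_mtopology[OF Metric_space_mspace_mdist])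

theorem proposition3p1:
  fixes sc :: "complex \<Rightarrow> 'a::{banach, real_normed_algebra_1, comm_ring_1} \<Rightarrow> 'a"
    and X :: "'x topology" and f :: "'x \<Rightarrow> 'a"
  assumes "complex_scaling sc"
    and "compact_space X" and "Hausdorff_space X"
    and "continuous_map X euclidean f"
    and "generates sc (f ` topspace X)"
  shows "homeomorphic_map (subtopology euclidean (character_space sc))
           (subtopology (mtopology_of (cfunspace X euclidean_metric)) (joint_spectrum sc X f))
           (\<lambda>\<phi>. restrict (\<phi> \<circ> f) (topspace X))"
proof -
  note sc = assms(1)
  define M :: "('x \<Rightarrow> complex) metric" where "M = cfunspace X euclidean_metric"
  define \<Phi> where "\<Phi> = (\<lambda>\<phi>::'a \<Rightarrow> complex. restrict (\<phi> \<circ> f) (topspace X))"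
  define Ch where "Ch = character_space sc"
  have cX: "compactin X (topspace X)" using assms(2) by (simp add: compact_space_def)
  have fcont: "continuous_on UNIV \<phi> \<Longrightarrow> continuous_map X euclidean (\<phi> \<circ> f)" for \<phi> :: "'a \<Rightarrow> complex"
    by (metis assms(4) continuous_map_compose continuous_map_iff_continuous subtopology_UNIV)
  have inM: "\<Phi> \<phi> \<in> mspace M" if "\<phi> \<in> Ch" for \<phi>
  proof -
    have "continuous_map X euclidean (\<phi> \<circ> f)" using fcont char_cont[OF sc] that Ch_def by blast
    then have "continuous_map X euclidean (\<Phi> \<phi>)"
      unfolding \<Phi>_def by (rule continuous_map_eq) auto
    then show ?thesis unfolding M_def compactin_mspace_cfunspace[OF cX] by (simp add: \<Phi>_def)
  qed
  have JS: "joint_spectrum sc X f = \<Phi> ` Ch" by (simp add: joint_spectrum_def \<Phi>_def Ch_def)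
  have top: "topspace (subtopology (mtopology_of M) (\<Phi> ` Ch)) = \<Phi> ` Ch"
    using inM by auto
  have compf: "compact (f ` topspace X)"
    using image_compactin[OF cX assms(4)] by simp
  have cont: "continuous_map (subtopology euclidean Ch) (mtopology_of M) \<Phi>"
    unfolding continuous_map_to_metric_of
  proof (intro ballI allI impI)
    fix \<phi>0 \<epsilon> assume p0: "\<phi>0 \<in> topspace (subtopology euclidean Ch)" and e: "(\<epsilon>::real) > 0"
    then have p0: "\<phi>0 \<in> Ch" by simp
    obtain K where K: "K \<subseteq> f ` topspace X" "finite K" "f ` topspace X \<subseteq> (\<Union>a\<in>K. ball a (\<epsilon>/4))"
      using compactE_image[OF compf, of "f ` topspace X" "\<lambda>a. ball a (\<epsilon>/4)"] e by force
    define V where "V = {\<psi>::'a \<Rightarrow> complex. \<forall>a\<in>K. \<psi> (id a) \<in> ball (\<phi>0 a) (\<epsilon>/4)}"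
    have oV: "open V" unfolding V_def by (rule product_topology_basis') (use K in auto)
    show "\<exists>U. openin (subtopology euclidean Ch) U \<and> \<phi>0 \<in> U \<and> (\<forall>y\<in>U. \<Phi> y \<in> mball_of M (\<Phi> \<phi>0) \<epsilon>)"
    proof (intro exI conjI ballI)
      show "openin (subtopology euclidean Ch) (V \<inter> Ch)"
        using oV by (auto simp: openin_subtopology)
      show "\<phi>0 \<in> V \<inter> Ch" using p0 e by (simp add: V_def)
      fix \<psi> assume "\<psi> \<in> V \<inter> Ch"
      then have ps: "\<psi> \<in> Ch" and psV: "\<forall>a\<in>K. dist (\<phi>0 a) (\<psi> a) < \<epsilon>/4" by (auto simp: V_def)
      have "mdist M (\<Phi> \<phi>0) (\<Phi> \<psi>) \<le> 3 * \<epsilon> / 4"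
        unfolding M_def
      proof (rule mdist_cfunspace_le)
        show "0 \<le> 3 * \<epsilon> / 4" using e by simp
        fix x assume x: "x \<in> topspace X"
        then obtain a where a: "a \<in> K" "dist a (f x) < \<epsilon>/4" using K by force
        have "dist (\<phi>0 (f x)) (\<psi> (f x)) \<le> dist (\<phi>0 (f x)) (\<phi>0 a) + dist (\<phi>0 a) (\<psi> a) + dist (\<psi> a) (\<psi> (f x))"
          using dist_triangle[of "\<phi>0 (f x)" "\<psi> (f x)" "\<phi>0 a"] dist_triangle[of "\<phi>0 a" "\<psi> (f x)" "\<psi> a"] by linarith
        also have "\<dots> \<le> 3 * \<epsilon> / 4"
          using char_lip[OF sc p0[unfolded Ch_def], of "f x" a] char_lip[OF sc ps[unfolded Ch_def], of a "f x"]
            psV a(1) a(2) by (fastforce simp: dist_commute)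
        finally show "mdist euclidean_metric (\<Phi> \<phi>0 x) (\<Phi> \<psi> x) \<le> 3 * \<epsilon> / 4"
          using x by (simp add: \<Phi>_def)
      qed
      then show "\<Phi> \<psi> \<in> mball_of M (\<Phi> \<phi>0) \<epsilon>"
        using inM[OF p0] inM[OF ps] e by simp
    qed
  qed
  have inj: "inj_on \<Phi> Ch"
  proof (rule inj_onI)
    fix \<phi> \<psi> assume p: "\<phi> \<in> Ch" and q: "\<psi> \<in> Ch" and eq: "\<Phi> \<phi> = \<Phi> \<psi>"
    let ?S = "{a. \<phi> a = \<psi> a}"
    note P = char_props[OF sc p[unfolded Ch_def]] and Q = char_props[OF sc q[unfolded Ch_def]]
    have "complex_subalgebra sc ?S"
      unfolding complex_subalgebra_def by (simp add: P Q)
    moreover have "closed ?S"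
      using char_cont[OF sc] p q Ch_def by (intro closed_Collect_eq) auto
    moreover have "f ` topspace X \<subseteq> ?S"
    proof
      fix y assume "y \<in> f ` topspace X"
      then obtain x where x: "x \<in> topspace X" "y = f x" by auto
      have "\<Phi> \<phi> x = \<Phi> \<psi> x" using eq by simp
      then show "y \<in> ?S" using x by (simp add: \<Phi>_def)
    qed
    ultimately have "UNIV \<subseteq> ?S" using assms(5) unfolding generates_def by blast
    then show "\<phi> = \<psi>" by auto
  qed
  have "homeomorphic_map (subtopology euclidean Ch) (subtopology (mtopology_of M) (\<Phi> ` Ch)) \<Phi>"
  proof (rule continuous_imp_homeomorphic_map)
    show "continuous_map (subtopology euclidean Ch) (subtopology (mtopology_of M) (\<Phi> ` Ch)) \<Phi>"
      using cont by (simp add: continuous_map_in_subtopology)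
    show "compact_space (subtopology euclidean Ch)"
      using char_compact[OF sc] Ch_def by (simp add: compact_space_subtopology)
    show "Hausdorff_space (subtopology (mtopology_of M) (\<Phi> ` Ch))"
      by (simp add: Hausdorff_mtopology_of Hausdorff_space_subtopology)
    show "\<Phi> ` topspace (subtopology euclidean Ch) = topspace (subtopology (mtopology_of M) (\<Phi> ` Ch))"
      using top by simp
    show "inj_on \<Phi> (topspace (subtopology euclidean Ch))" using inj by simp
  qed
  then show ?thesis by (simp add: M_def \<Phi>_def Ch_def JS)
qed

end
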